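(* For every finite simple graph $\Gamma$ on vertex set $V$, $F(P_{B(\Gamma)})=F_\Gamma$. Consequently $F_\Gamma=\sum_{\alpha\models |V|}\zeta_\alpha(\Gamma)M_\alpha$, where $\zeta_\alpha(\Gamma)$ is the number of ordered colorings $\lambda:V\to\{1,\dots,k(\alpha)\}$ that are surjective and have type $\alpha$.
   Context: For a finite simple graph $\Gamma$ on $V$, $B(\Gamma)$ is the collection of nonempty $I\subseteq V$ such that the induced subgraph $\Gamma|_I$ is connected; $P_{B(\Gamma)}=\sum_{I\in B(\Gamma)}\mathrm{Conv}\{e_i:i\in I\}\subset\mathbb{R}^V$ (the graph-associahedron). For a convex polytope $Q\subset\mathbb{R}^V$, $f:V\to\mathbb{N}=\{1,2,\dots\}$ is $Q$-generic if $x\mapsto\sum_v f(v)x_v$ attains its maximum over $Q$ at a unique point, and $F(Q)=\sum_{f\ Q\text{-generic}}\prod_{v}x_{f(v)}$. For a composition $\alpha=(a_1,\dots,a_k)$ of length $k(\alpha)=k$, $M_\alpha=\sum_{i_1<\dots<i_k}x_{i_1}^{a_1}\cdots x_{i_k}^{a_k}$. A coloring is a map $\lambda:V\to\mathbb{N}$; let $i_1<\dots<i_k$ be its values and $I_j=\lambda^{-1}(\{i_1,\dots,i_j\})$, $I_0=\emptyset$. It is ordered if for each $j$, no two distinct vertices $u,w$ with $\lambda(u)=\lambda(w)=i_j$ are joined by a path in $\Gamma$ (possibly a single edge) all of whose internal vertices lie in $I_{j-1}$. Its type is $(|\lambda^{-1}(i_1)|,\dots,|\lambda^{-1}(i_k)|)$.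 $F_\Gamma=\sum_{\lambda\text{ ordered}}\prod_{v\in V}x_{\lambda(v)}$; for the empty graph $F_\Gamma=1$. *)

theory Defs
  imports Complex_Main "HOL-Library.Multiset"
begin

definition simple_graph :: "'a set \<Rightarrow> ('a \<Rightarrow> 'a \<Rightarrow> bool) \<Rightarrow> bool" where
  "simple_graph V E \<longleftrightarrow> finite V \<and> (\<forall>u w. E u w \<longrightarrow> u \<in> V \<and> w \<in> V)
     \<and> (\<forall>u w. E u w \<longrightarrow> E w u) \<and> (\<forall>u. \<not> E u u)"

definition is_path :: "('a \<Rightarrow> 'a \<Rightarrow> bool) \<Rightarrow> 'a list \<Rightarrow> bool" where
  "is_path E ps \<longleftrightarrow> ps \<noteq> [] \<and> distinct ps \<and> successively E ps"

definition induced_connected :: "('a \<Rightarrow> 'a \<Rightarrow> bool) \<Rightarrow> 'a set \<Rightarrow> bool" where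
  "induced_connected E I \<longleftrightarrow>
     (\<forall>u\<in>I. \<forall>w\<in>I. \<exists>xs. is_path E (u # xs @ [w]) \<and> set xs \<subseteq> I \<or> u = w)"

definition building_set :: "'a set \<Rightarrow> ('a \<Rightarrow> 'a \<Rightarrow> bool) \<Rightarrow> 'a set set" where
  "building_set V E = {I. I \<subseteq> V \<and> I \<noteq> {} \<and> induced_connected E I}"

definition simplex :: "'a set \<Rightarrow> ('a \<Rightarrow> real) set" where
  "simplex I = {x. \<exists>c :: 'a \<Rightarrow> real. (\<forall>i\<in>I. c i \<ge> 0) \<and> (\<Sum>i\<in>I. c i) = 1
       \<and> x = (\<lambda>v. \<Sum>i\<in>I. c i * (if v = i then 1 else 0))}"

definition minkowski_sum :: "'b set \<Rightarrow> ('b \<Rightarrow> ('a \<Rightarrow> real) set) \<Rightarrow> ('a \<Rightarrow> real) set" where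
  "minkowski_sum B P = {x. \<exists>p. (\<forall>I\<in>B. p I \<in> P I) \<and> x = (\<lambda>v. \<Sum>I\<in>B. p I v)}"

definition graph_associahedron :: "'a set \<Rightarrow> ('a \<Rightarrow> 'a \<Rightarrow> bool) \<Rightarrow> ('a \<Rightarrow> real) set" where
  "graph_associahedron V E = minkowski_sum (building_set V E) simplex"

definition generic :: "'a set \<Rightarrow> ('a \<Rightarrow> real) set \<Rightarrow> ('a \<Rightarrow> nat) \<Rightarrow> bool" where
  "generic V Q f \<longleftrightarrow> (\<exists>!x. x \<in> Q \<and> (\<forall>y\<in>Q. (\<Sum>v\<in>V. real (f v) * y v) \<le> (\<Sum>v\<in>V. real (f v) * x v)))"

text \<open>A monomial in the variables x_1, x_2, ... is encoded by the multiset of indices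
(with multiplicity = exponent). The monomial prod_{v in V} x_{f v} is
image_mset f (mset_set V). A formal power series is encoded by its coefficient
function nat multiset => nat.\<close>

definition pos_maps :: "'a set \<Rightarrow> ('a \<Rightarrow> nat) set" where
  "pos_maps V = {f. (\<forall>v\<in>V. f v \<ge> 1) \<and> (\<forall>v. v \<notin> V \<longrightarrow> f v = 0)}"

definition F_poly :: "'a set \<Rightarrow> ('a \<Rightarrow> real) set \<Rightarrow> nat multiset \<Rightarrow> nat" where
  "F_poly V Q m = card {f \<in> pos_maps V. generic V Q f \<and> image_mset f (mset_set V) = m}"

definition ordered_coloring :: "'a set \<Rightarrow> ('a \<Rightarrow> 'a \<Rightarrow> bool) \<Rightarrow> ('a \<Rightarrow> nat) \<Rightarrow> bool" where
  "ordered_coloring V E lam \<longleftrightarrow>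
     (\<forall>c \<in> lam ` V. \<forall>u\<in>V. \<forall>w\<in>V. lam u = c \<and> lam w = c \<and> u \<noteq> w \<longrightarrow>
        \<not> (\<exists>xs. is_path E (u # xs @ [w]) \<and> set xs \<subseteq> {v\<in>V. lam v < c}))"

definition F_graph :: "'a set \<Rightarrow> ('a \<Rightarrow> 'a \<Rightarrow> bool) \<Rightarrow> nat multiset \<Rightarrow> nat" where
  "F_graph V E m = card {lam \<in> pos_maps V. ordered_coloring V E lam \<and> image_mset lam (mset_set V) = m}"

definition compositions :: "nat \<Rightarrow> nat list set" where
  "compositions n = {\<alpha>. (\<forall>a\<in>set \<alpha>. a \<ge> 1) \<and> sum_list \<alpha> = n}"

definition M_coeff :: "nat list \<Rightarrow> nat multiset \<Rightarrow> nat" where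
  "M_coeff \<alpha> m = (if \<exists>ix. length ix = length \<alpha> \<and> sorted_wrt (<) ix \<and> (\<forall>i\<in>set ix. i \<ge> 1)
        \<and> m = (\<Sum>j<length \<alpha>. replicate_mset (\<alpha> ! j) (ix ! j)) then 1 else 0)"

definition zeta :: "'a set \<Rightarrow> ('a \<Rightarrow> 'a \<Rightarrow> bool) \<Rightarrow> nat list \<Rightarrow> nat" where
  "zeta V E \<alpha> = card {lam \<in> pos_maps V. ordered_coloring V E lam
       \<and> lam ` V = {1..length \<alpha>}
       \<and> (\<forall>j<length \<alpha>. card {v\<in>V. lam v = j + 1} = \<alpha> ! j)}"

end

theory Submission
  imports Defs
begin


lemma ordered_alt:
  "ordered_coloring V E lam \<longleftrightarrow> (\<forall>u\<in>V. \<forall>w\<in>V. lam u = lam w \<and> u \<noteq> w \<longrightarrow>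
     \<not> (\<exists>xs. is_path E (u # xs @ [w]) \<and> set xs \<subseteq> {v\<in>V. lam v < lam u}))"
  unfolding ordered_coloring_def by fastforce

lemma sub_path:
  assumes "successively E (q1 @ a # q2 @ b # q3)" "distinct (q1 @ a # q2 @ b # q3)"
  shows "is_path E (a # q2 @ [b])"
proof -
  have "q1 @ a # q2 @ b # q3 = q1 @ ((a # q2 @ [b]) @ q3)" by simp
  then have "successively E ((a # q2 @ [b]) @ q3)" using assms(1)
    by (metis successively_append_iff)
  then have "successively E (a # q2 @ [b])" by (metis successively_append_iff)
  moreover have "distinct (a # q2 @ [b])" using assms(2) by auto
  ultimately show ?thesis unfolding is_path_def by simp
qed

lemma path_connected:
  assumes "\<And>u w. E u w \<Longrightarrow> E w u" and "is_path E ps"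
  shows "induced_connected E (set ps)"
  unfolding induced_connected_def
proof (intro ballI)
  fix a b assume a: "a \<in> set ps" and b: "b \<in> set ps"
  show "\<exists>xs. is_path E (a # xs @ [b]) \<and> set xs \<subseteq> set ps \<or> a = b"
  proof (cases "a = b")
    case True then show ?thesis by blast
  next
    case False
    obtain p1 p2 where ps: "ps = p1 @ a # p2" using a by (meson split_list)
    have sd: "successively E ps" "distinct ps" using assms(2) unfolding is_path_def by auto
    from b False ps have "b \<in> set p1 \<or> b \<in> set p2" by auto
    then show ?thesis
    proof
      assume "b \<in> set p2"
      then obtain q1 q2 where "p2 = q1 @ b # q2" by (meson split_list)
      then have "is_path E (a # q1 @ [b])" using sub_path[of E p1 a q1 b q2] sd ps by simp
      then show ?thesis using ps \<open>p2 = q1 @ b # q2\<close> by auto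
    next
      assume "b \<in> set p1"
      then obtain q1 q2 where q: "p1 = q1 @ b # q2" by (meson split_list)
      then have "is_path E (b # q2 @ [a])" using sub_path[of E q1 b q2 a p2] sd ps by simp
      then have "successively (\<lambda>x y. E y x) (b # q2 @ [a])" "distinct (b # q2 @ [a])"
        unfolding is_path_def using assms(1) by (auto elim: successively_mono)
      then have "is_path E (rev (b # q2 @ [a]))" unfolding is_path_def
        by (simp only: successively_rev distinct_rev) simp
      then have "is_path E (a # rev q2 @ [b])" by simp
      then show ?thesis using ps q by auto
    qed
  qed
qed

lemma first_color:
  fixes f :: "'a \<Rightarrow> nat"
  assumes "is_path E (u # xs @ [w])" "u \<noteq> w" "f u = c" "f w = c" "\<forall>v\<in>set xs. f v \<le> c"
  shows "\<exists>ys w'. is_path E (u # ys @ [w']) \<and> w' \<in> set (xs @ [w]) \<and> u \<noteq> w' \<and> f w' = c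
     \<and> set ys \<subseteq> set xs \<and> (\<forall>v\<in>set ys. f v < c)"
proof -
  have "\<exists>x\<in>set (xs @ [w]). f x = c" using assms by auto
  then obtain ys w' zs where sp: "xs @ [w] = ys @ w' # zs" "f w' = c" "\<forall>y\<in>set ys. f y \<noteq> c"
    by (rule split_list_first_propE)
  have sd: "successively E (u # xs @ [w])" "distinct (u # xs @ [w])" using assms(1) unfolding is_path_def by auto
  then have "is_path E (u # ys @ [w'])" using sub_path[of E "[]" u ys w' zs] sp by simp
  moreover have "w' \<in> set (xs @ [w])" using sp by simp
  moreover have "u \<noteq> w'" using sd(2) \<open>w' \<in> set (xs @ [w])\<close> by auto
  moreover have ys: "set ys \<subseteq> set xs"
  proof
    fix y assume "y \<in> set ys"
    then have "y \<in> set (xs @ [w])" by (simp add: sp(1))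
    moreover have "y \<noteq> w" using sp(3) \<open>y \<in> set ys\<close> assms(4) sp(2) by auto
    ultimately show "y \<in> set xs" by auto
  qed
  moreover have "\<forall>v\<in>set ys. f v < c" using ys sp(3) assms(5) by force
  ultimately show ?thesis using sp(2) by blast
qed



definition ev :: "'a \<Rightarrow> 'a \<Rightarrow> real" where "ev a = (\<lambda>v. if v = a then 1 else 0)"
definition phi :: "'a set \<Rightarrow> ('a \<Rightarrow> nat) \<Rightarrow> ('a \<Rightarrow> real) \<Rightarrow> real" where
  "phi V f y = (\<Sum>v\<in>V. real (f v) * y v)"

lemma ev_simplex: assumes "finite I" "a \<in> I" shows "ev a \<in> simplex I"
  unfolding simplex_def
proof (intro CollectI exI[of _ "\<lambda>i. if i = a then 1 else 0"] conjI)
  show "(\<Sum>i\<in>I. if i = a then 1 else 0 :: real) = 1" using assms by simp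
  show "ev a = (\<lambda>v. \<Sum>i\<in>I. (if i = a then 1 else 0) * (if v = i then 1 else 0 :: real))"
  proof
    fix v
    have "(\<Sum>i\<in>I. (if i = a then 1 else 0) * (if v = i then 1 else 0 :: real))
       = (\<Sum>i\<in>I. if i = a then (if v = a then 1 else 0) else 0)"
      by (rule sum.cong) auto
    then show "ev a v = (\<Sum>i\<in>I. (if i = a then 1 else 0) * (if v = i then 1 else 0 :: real))"
      using assms by (simp add: ev_def)
  qed
qed auto

lemma phi_coef:
  assumes "finite V" "I \<subseteq> V"
  shows "phi V f (\<lambda>v. \<Sum>i\<in>I. c i * (if v = i then 1 else 0)) = (\<Sum>i\<in>I. c i * real (f i))"
proof -
  have "phi V f (\<lambda>v. \<Sum>i\<in>I. c i * (if v = i then 1 else 0))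
     = (\<Sum>v\<in>V. \<Sum>i\<in>I. real (f v) * (c i * (if v = i then 1 else 0)))"
    unfolding phi_def by (simp add: sum_distrib_left)
  also have "\<dots> = (\<Sum>i\<in>I. \<Sum>v\<in>V. real (f v) * (c i * (if v = i then 1 else 0)))"
    by (rule sum.swap)
  also have "\<dots> = (\<Sum>i\<in>I. c i * real (f i))"
  proof (rule sum.cong)
    fix i assume "i \<in> I"
    then have "i \<in> V" using assms by auto
    have "(\<Sum>v\<in>V. real (f v) * (c i * (if v = i then 1 else 0))) = (\<Sum>v\<in>V. if v = i then real (f i) * c i else 0)"
      by (rule sum.cong) auto
    also have "\<dots> = c i * real (f i)" using \<open>i \<in> V\<close> assms(1) by simp
    finally show "(\<Sum>v\<in>V. real (f v) * (c i * (if v = i then 1 else 0))) = c i * real (f i)" .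
  qed simp
  finally show ?thesis .
qed

lemma phi_ev: assumes "finite V" "a \<in> V" shows "phi V f (ev a) = real (f a)"
proof -
  have "phi V f (ev a) = (\<Sum>v\<in>V. if v = a then real (f a) else 0)"
    unfolding phi_def ev_def by (rule sum.cong) auto
  then show ?thesis using assms by simp
qed

lemma simplex_le:
  assumes "finite V" "I \<subseteq> V" "y \<in> simplex I" "\<forall>i\<in>I. real (f i) \<le> M"
  shows "phi V f y \<le> M"
proof -
  obtain c where c: "\<forall>i\<in>I. c i \<ge> 0" "(\<Sum>i\<in>I. c i) = 1"
    "y = (\<lambda>v. \<Sum>i\<in>I. c i * (if v = i then 1 else 0))"
    using assms(3) unfolding simplex_def by blast
  have "phi V f y = (\<Sum>i\<in>I. c i * real (f i))" using c(3) phi_coef[OF assms(1,2)] by simp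
  also have "\<dots> \<le> (\<Sum>i\<in>I. c i * M)"
    by (rule sum_mono) (use c(1) assms(4) in \<open>auto intro: mult_left_mono\<close>)
  also have "\<dots> = M" using c(2) by (simp add: sum_distrib_right[symmetric])
  finally show ?thesis .
qed

lemma simplex_eq:
  assumes "finite V" "I \<subseteq> V" "y \<in> simplex I" "a \<in> I"
    "\<forall>i\<in>I. i \<noteq> a \<longrightarrow> f i < f a" "phi V f y \<ge> real (f a)"
  shows "y = ev a"
proof -
  obtain c where c: "\<forall>i\<in>I. c i \<ge> 0" "(\<Sum>i\<in>I. c i) = 1"
    "y = (\<lambda>v. \<Sum>i\<in>I. c i * (if v = i then 1 else 0))"
    using assms(3) unfolding simplex_def by blast
  have fin: "finite I" using assms(1,2) finite_subset by blast
  have "phi V f y = (\<Sum>i\<in>I. c i * real (f i))" using c(3) phi_coef[OF assms(1,2)] by simp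
  have "(\<Sum>i\<in>I. c i * (real (f a) - real (f i))) = real (f a) - phi V f y"
    using c(2) \<open>phi V f y = _\<close>
    by (simp add: right_diff_distrib sum_subtractf sum_distrib_right[symmetric])
  also have "\<dots> \<le> 0" using assms(6) by simp
  finally have le: "(\<Sum>i\<in>I. c i * (real (f a) - real (f i))) \<le> 0" .
  have nn: "\<forall>i\<in>I. 0 \<le> c i * (real (f a) - real (f i))"
    using c(1) assms(5) by (metis diff_ge_0_iff_ge eq_iff_diff_eq_0 less_imp_le mult_nonneg_nonneg of_nat_le_iff order.refl)
  have "(\<Sum>i\<in>I. c i * (real (f a) - real (f i))) = 0"
  proof -
    have "0 \<le> (\<Sum>i\<in>I. c i * (real (f a) - real (f i)))" using nn by (simp add: sum_nonneg)
    then show ?thesis using le by linarith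
  qed
  then have "\<forall>i\<in>I. c i * (real (f a) - real (f i)) = 0"
    using sum_nonneg_eq_0_iff[OF fin, of "\<lambda>i. c i * (real (f a) - real (f i))"] nn by blast
  then have c0: "\<forall>i\<in>I. i \<noteq> a \<longrightarrow> c i = 0" using assms(5) by (metis less_irrefl mult_eq_0_iff of_nat_eq_iff right_minus_eq)
  have "(\<Sum>i\<in>I. c i) = (\<Sum>i\<in>I. if i = a then c a else 0)" by (rule sum.cong) (use c0 in auto)
  then have ca: "c a = 1" using c(2) fin assms(4) by simp
  show ?thesis unfolding c(3) ev_def
  proof
    fix v
    have "(\<Sum>i\<in>I. c i * (if v = i then 1 else 0)) = (\<Sum>i\<in>I. if i = a then (if v = a then 1 else 0) else 0)"
      by (rule sum.cong) (use c0 ca in auto)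
    then show "(\<Sum>i\<in>I. c i * (if v = i then 1 else 0)) = (if v = a then 1 else 0)"
      using fin assms(4) by simp
  qed
qed

lemma phi_sum: "phi V f (\<lambda>v. \<Sum>J\<in>B. p J v) = (\<Sum>J\<in>B. phi V f (p J))"
  unfolding phi_def by (simp add: sum_distrib_left sum.swap[of _ V])



lemma part1:
  assumes sg: "simple_graph V E"
  shows "generic V (graph_associahedron V E) f \<longleftrightarrow> ordered_coloring V E f"
proof -
  have fin: "finite V" and sym: "\<And>u w. E u w \<Longrightarrow> E w u" using sg unfolding simple_graph_def by auto
  define B where "B = building_set V E"
  have finB: "finite B" unfolding B_def building_set_def
    by (rule finite_subset[of _ "Pow V"]) (use fin in auto)
  have Jp: "J \<subseteq> V" "J \<noteq> {}" "finite J" "induced_connected E J" if "J \<in> B" for J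
    using that fin finite_subset unfolding B_def building_set_def by auto
  define g where "g J = (SOME a. a \<in> J \<and> (\<forall>b\<in>J. f b \<le> f a))" for J
  have gJ: "g J \<in> J \<and> (\<forall>b\<in>J. f b \<le> f (g J))" if JB: "J \<in> B" for J
  proof -
    obtain a where "a \<in> J" "f a = Max (f ` J)" proof -
      have "Max (f ` J) \<in> f ` J" using Max_in[of "f ` J"] Jp[OF JB] by auto
      then show ?thesis using that by auto
    qed
    then have "a \<in> J \<and> (\<forall>b\<in>J. f b \<le> f a)" using Jp[OF JB] by auto
    then show ?thesis unfolding g_def by (rule someI)
  qed
  define Q where "Q = graph_associahedron V E"
  have Q: "Q = {x. \<exists>p. (\<forall>I\<in>B. p I \<in> simplex I) \<and> x = (\<lambda>v. \<Sum>I\<in>B. p I v)}"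
    unfolding Q_def graph_associahedron_def minkowski_sum_def B_def ..
  have gen: "generic V Q f \<longleftrightarrow> (\<exists>!x. x \<in> Q \<and> (\<forall>y\<in>Q. phi V f y \<le> phi V f x))"
    unfolding generic_def phi_def ..
  define Mx where "Mx = (\<Sum>J\<in>B. real (f (g J)))"
  have upper: "phi V f y \<le> Mx" if yQ: "y \<in> Q" for y
  proof -
    obtain p where p: "\<forall>I\<in>B. p I \<in> simplex I" "y = (\<lambda>v. \<Sum>I\<in>B. p I v)" using yQ Q by auto
    have "phi V f y = (\<Sum>J\<in>B. phi V f (p J))" using p(2) phi_sum by simp
    also have "\<dots> \<le> Mx" unfolding Mx_def
    proof (rule sum_mono)
      fix J assume JB: "J \<in> B"
      show "phi V f (p J) \<le> real (f (g J))"
        using simplex_le[OF fin Jp(1)[OF JB], of "p J" f] p gJ[OF JB] JB by auto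
    qed
    finally show ?thesis .
  qed
  have attain: "(\<lambda>v. \<Sum>J\<in>B. ev (h J) v) \<in> Q \<and> phi V f (\<lambda>v. \<Sum>J\<in>B. ev (h J) v) = Mx"
    if "\<forall>J\<in>B. h J \<in> J \<and> f (h J) = f (g J)" for h
  proof
    have "\<forall>J\<in>B. ev (h J) \<in> simplex J"
    proof
      fix J assume JB: "J \<in> B"
      show "ev (h J) \<in> simplex J" by (rule ev_simplex[OF Jp(3)[OF JB]]) (use that JB in auto)
    qed
    then show "(\<lambda>v. \<Sum>J\<in>B. ev (h J) v) \<in> Q" unfolding Q
      by (intro CollectI exI[of _ "\<lambda>J. ev (h J)"] conjI) simp_all
    have "phi V f (\<lambda>v. \<Sum>J\<in>B. ev (h J) v) = (\<Sum>J\<in>B. phi V f (ev (h J)))" by (rule phi_sum)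
    also have "\<dots> = Mx" unfolding Mx_def
    proof (rule sum.cong)
      fix J assume JB: "J \<in> B"
      have "h J \<in> V" using that JB Jp(1)[OF JB] by auto
      then show "phi V f (ev (h J)) = real (f (g J))" using phi_ev[OF fin] that JB by auto
    qed simp
    finally show "phi V f (\<lambda>v. \<Sum>J\<in>B. ev (h J) v) = Mx" .
  qed
  show ?thesis
  proof
    assume G: "generic V (graph_associahedron V E) f"
    show "ordered_coloring V E f"
    proof (rule ccontr)
      assume "\<not> ordered_coloring V E f"
      then obtain u w xs where uw: "u \<in> V" "w \<in> V" "f u = f w" "u \<noteq> w"
        "is_path E (u # xs @ [w])" "set xs \<subseteq> {v\<in>V. f v < f u}"
        unfolding ordered_alt by auto
      define I where "I = set (u # xs @ [w])"
      have IB: "I \<in> B" unfolding B_def building_set_def I_def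
        using uw path_connected[OF sym uw(5)] by auto
      have fI: "\<forall>b\<in>I. f b \<le> f u" unfolding I_def using uw by auto
      have "u \<in> I" unfolding I_def by simp
      have "f u \<le> f (g I)" using gJ[OF IB] \<open>u \<in> I\<close> by blast
      moreover have "f (g I) \<le> f u" using gJ[OF IB] fI by blast
      ultimately have fgI: "f (g I) = f u" by simp
      define h1 where "h1 J = (if J = I then u else g J)" for J
      define h2 where "h2 J = (if J = I then w else g J)" for J
      have a1: "\<forall>J\<in>B. h1 J \<in> J \<and> f (h1 J) = f (g J)" unfolding h1_def using gJ fgI I_def by auto
      have a2: "\<forall>J\<in>B. h2 J \<in> J \<and> f (h2 J) = f (g J)" unfolding h2_def using gJ fgI I_def uw(3) by auto
      define x1 where "x1 = (\<lambda>v. \<Sum>J\<in>B. ev (h1 J) v)"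
      define x2 where "x2 = (\<lambda>v. \<Sum>J\<in>B. ev (h2 J) v)"
      have m1: "x1 \<in> Q \<and> (\<forall>y\<in>Q. phi V f y \<le> phi V f x1)" using attain[OF a1] upper unfolding x1_def by auto
      have m2: "x2 \<in> Q \<and> (\<forall>y\<in>Q. phi V f y \<le> phi V f x2)" using attain[OF a2] upper unfolding x2_def by auto
      have "\<exists>!x. x \<in> Q \<and> (\<forall>y\<in>Q. phi V f y \<le> phi V f x)" using G gen Q_def by simp
      then have "x1 = x2" using m1 m2 by blast
      moreover have "x1 u - x2 u = 1"
      proof -
        have "x1 u - x2 u = (\<Sum>J\<in>B. ev (h1 J) u - ev (h2 J) u)"
          unfolding x1_def x2_def by (simp add: sum_subtractf)
        also have "\<dots> = (\<Sum>J\<in>B. if J = I then 1 else 0)"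
          by (rule sum.cong) (use uw(4) in \<open>auto simp: h1_def h2_def ev_def\<close>)
        also have "\<dots> = 1" using finB IB by simp
        finally show ?thesis .
      qed
      ultimately show False by simp
    qed
  next
    assume O: "ordered_coloring V E f"
    have uniq: "f i < f (g J)" if th: "J \<in> B" "i \<in> J" "i \<noteq> g J" for J i
    proof (rule ccontr)
      assume "\<not> f i < f (g J)"
      then have eq: "f i = f (g J)" using gJ[OF th(1)] th(2) by force
      have "\<exists>xs. is_path E (g J # xs @ [i]) \<and> set xs \<subseteq> J \<or> g J = i"
        using Jp(4)[OF th(1)] gJ[OF th(1)] th(2) unfolding induced_connected_def by blast
      then obtain xs where xs: "is_path E (g J # xs @ [i])" "set xs \<subseteq> J"
        using th(3) by blast
      have bnd: "\<forall>v\<in>set xs. f v \<le> f (g J)" using xs(2) gJ[OF th(1)] by auto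
      obtain ys w' where yw: "is_path E (g J # ys @ [w'])" "w' \<in> set (xs @ [i])" "g J \<noteq> w'"
        "f w' = f (g J)" "set ys \<subseteq> set xs" "\<forall>v\<in>set ys. f v < f (g J)"
        using first_color[OF xs(1) th(3)[symmetric] refl eq bnd] by blast
      have "g J \<in> V" "w' \<in> V" "set ys \<subseteq> {v\<in>V. f v < f (g J)}"
        using yw xs(2) Jp(1)[OF th(1)] gJ[OF th(1)] th(2) by auto
      note gv = this
      from O have A: "\<forall>u\<in>V. \<forall>w\<in>V. f u = f w \<and> u \<noteq> w \<longrightarrow>
         \<not> (\<exists>xs. is_path E (u # xs @ [w]) \<and> set xs \<subseteq> {v\<in>V. f v < f u})"
        unfolding ordered_alt .
      have "\<not> (\<exists>xs. is_path E (g J # xs @ [w']) \<and> set xs \<subseteq> {v\<in>V. f v < f (g J)})"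
        using A[rule_format, OF gv(1,2)] yw(3,4) by simp
      then show False using yw(1) gv(3) by blast
    qed
    define x0 where "x0 = (\<lambda>v. \<Sum>J\<in>B. ev (g J) v)"
    have m0: "x0 \<in> Q \<and> (\<forall>y\<in>Q. phi V f y \<le> phi V f x0)"
      using attain[of g] gJ upper unfolding x0_def by auto
    have "\<exists>!x. x \<in> Q \<and> (\<forall>y\<in>Q. phi V f y \<le> phi V f x)"
    proof (rule ex1I[of _ x0])
      show "x0 \<in> Q \<and> (\<forall>y\<in>Q. phi V f y \<le> phi V f x0)" by (rule m0)
      fix x assume x: "x \<in> Q \<and> (\<forall>y\<in>Q. phi V f y \<le> phi V f x)"
      obtain p where p: "\<forall>I\<in>B. p I \<in> simplex I" "x = (\<lambda>v. \<Sum>I\<in>B. p I v)" using x Q by auto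
      have px: "phi V f x = (\<Sum>J\<in>B. phi V f (p J))" using p(2) phi_sum by simp
      have le: "\<forall>J\<in>B. phi V f (p J) \<le> real (f (g J))"
      proof
        fix J assume JB: "J \<in> B"
        show "phi V f (p J) \<le> real (f (g J))"
          using simplex_le[OF fin Jp(1)[OF JB], of "p J" f] p gJ[OF JB] JB by auto
      qed
      have "phi V f x \<ge> Mx" using x m0 attain[of g] gJ unfolding x0_def by auto
      then have "(\<Sum>J\<in>B. real (f (g J)) - phi V f (p J)) \<le> 0"
        unfolding Mx_def px by (simp add: sum_subtractf)
      moreover have "\<forall>J\<in>B. 0 \<le> real (f (g J)) - phi V f (p J)" using le by auto
      ultimately have "(\<Sum>J\<in>B. real (f (g J)) - phi V f (p J)) = 0"
        by (meson antisym sum_nonneg)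
      then have "\<forall>J\<in>B. real (f (g J)) - phi V f (p J) = 0"
        using sum_nonneg_eq_0_iff[OF finB, of "\<lambda>J. real (f (g J)) - phi V f (p J)"] le by auto
      then have "\<forall>J\<in>B. p J = ev (g J)"
      proof (intro ballI)
        fix J assume JB: "J \<in> B" and z: "\<forall>J\<in>B. real (f (g J)) - phi V f (p J) = 0"
        have e: "phi V f (p J) = real (f (g J))" using z JB by simp
        show "p J = ev (g J)"
          by (rule simplex_eq[OF fin Jp(1)[OF JB], where f=f]) (use JB e p gJ[OF JB] uniq[OF JB] in auto)
      qed
      then show "x = x0" unfolding p(2) x0_def by simp
    qed
    then show "generic V (graph_associahedron V E) f" using gen unfolding Q_def by simp
  qed
qed



lemma ordered_transfer:
  assumes "\<forall>v\<in>V. mu v = h (lam v)" "\<forall>a\<in>lam ` V. \<forall>b\<in>lam ` V. (a < b \<longleftrightarrow> h a < h b)"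
  shows "ordered_coloring V E lam \<longleftrightarrow> ordered_coloring V E mu"
proof -
  have eq: "lam u = lam w \<longleftrightarrow> mu u = mu w" if "u \<in> V" "w \<in> V" for u w
    using assms that by (metis image_eqI linorder_neq_iff)
  have lt: "{v\<in>V. lam v < lam u} = {v\<in>V. mu v < mu u}" if "u \<in> V" for u
    using assms that by auto
  show ?thesis unfolding ordered_alt using eq lt by auto
qed

lemma sorted_nth_less_iff:
  fixes xs :: "nat list"
  assumes "sorted_wrt (<) xs" "i < length xs" "j < length xs"
  shows "xs ! i < xs ! j \<longleftrightarrow> i < j"
  by (metis assms linorder_neq_iff order_less_asym sorted_wrt_nth_less)

lemma count_image_mset_set:
  assumes "finite V"
  shows "count (image_mset lam (mset_set V)) x = card {v\<in>V. lam v = x}"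
  using assms by (simp add: count_image_mset' Collect_conj_eq) (metis Collect_conj_eq Int_commute)

lemma finite_compositions: "finite (compositions n)"
proof -
  have len: "length xs \<le> sum_list xs" if "\<forall>a\<in>set xs. a \<ge> 1" for xs :: "nat list"
    using that by (induction xs) auto
  have "compositions n \<subseteq> {xs. set xs \<subseteq> {0..n} \<and> length xs \<le> n}"
    unfolding compositions_def using len member_le_sum_list by fastforce
  then show ?thesis using finite_lists_length_le[of "{0..n}" n] finite_subset by blast
qed



lemma M_char:
  fixes m :: "nat multiset"
  defines "ix \<equiv> sorted_list_of_set (set_mset m)"
  assumes pos: "\<forall>a\<in>set \<alpha>. a \<ge> 1"
  shows "M_coeff \<alpha> m = (if \<alpha> = map (count m) ix \<and> 0 \<notin># m then 1 else 0)"
proof -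
  have ixs: "sorted_wrt (<) ix" "set ix = set_mset m" "distinct ix"
    unfolding ix_def by (auto simp: strict_sorted_list_of_set)
  have cnt: "count (\<Sum>j<L. replicate_mset (ns ! j) (ys ! j)) x
      = (\<Sum>j<L. if ys ! j = x then ns ! j else 0)" for ys ns x L
    by (simp add: count_sum eq_commute)
  show ?thesis
  proof (cases "\<alpha> = map (count m) ix \<and> 0 \<notin># m")
    case True
    have "m = (\<Sum>j<length ix. replicate_mset (map (count m) ix ! j) (ix ! j))"
    proof (rule multiset_eqI)
      fix x
      have "(\<Sum>j<length ix. if ix ! j = x then map (count m) ix ! j else 0)
          = (\<Sum>j<length ix. if ix ! j = x then count m x else 0)"
        by (rule sum.cong) auto
      also have "\<dots> = count m x"
      proof (cases "x \<in> set ix")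
        case True
        then obtain j0 where j0: "j0 < length ix" "ix ! j0 = x" by (meson in_set_conv_nth)
        have "(\<Sum>j<length ix. if ix ! j = x then count m x else 0) = (\<Sum>j<length ix. if j = j0 then count m x else 0)"
          by (rule sum.cong) (use j0 ixs(3) nth_eq_iff_index_eq in auto)
        then show ?thesis using j0 by simp
      next
        case False
        then have "count m x = 0" using ixs(2) by (simp add: not_in_iff)
        moreover have "\<forall>j<length ix. ix ! j \<noteq> x" using False nth_mem by blast
        ultimately show ?thesis by simp
      qed
      finally have "(\<Sum>j<length ix. if ix ! j = x then map (count m) ix ! j else 0) = count m x" .
      then show "count m x = count (\<Sum>j<length ix. replicate_mset (map (count m) ix ! j) (ix ! j)) x"
        by (simp only: cnt)
    qed
    moreover have "\<forall>i\<in>set ix. i \<ge> 1" using True ixs(2) by (metis less_one not_le)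
    ultimately have "\<exists>ix'. length ix' = length \<alpha> \<and> sorted_wrt (<) ix' \<and> (\<forall>i\<in>set ix'. i \<ge> 1)
        \<and> m = (\<Sum>j<length \<alpha>. replicate_mset (\<alpha> ! j) (ix' ! j))"
      using True ixs(1) by (intro exI[of _ ix]) auto
    then show ?thesis using True unfolding M_coeff_def by simp
  next
    case False
    have "\<not> (\<exists>ix'. length ix' = length \<alpha> \<and> sorted_wrt (<) ix' \<and> (\<forall>i\<in>set ix'. i \<ge> 1)
        \<and> m = (\<Sum>j<length \<alpha>. replicate_mset (\<alpha> ! j) (ix' ! j)))"
    proof
      assume "\<exists>ix'. length ix' = length \<alpha> \<and> sorted_wrt (<) ix' \<and> (\<forall>i\<in>set ix'. i \<ge> 1)
        \<and> m = (\<Sum>j<length \<alpha>. replicate_mset (\<alpha> ! j) (ix' ! j))"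
      then obtain ys where ys: "length ys = length \<alpha>" "sorted_wrt (<) ys" "\<forall>i\<in>set ys. i \<ge> 1"
        "m = (\<Sum>j<length \<alpha>. replicate_mset (\<alpha> ! j) (ys ! j))" by blast
      have dys: "distinct ys" using ys(2) strict_sorted_iff by blast
      have cm: "count m x = (\<Sum>j<length ys. if ys ! j = x then \<alpha> ! j else 0)" for x
        using ys(4) ys(1) cnt[of \<alpha> ys "length \<alpha>" x] by simp
      have cj: "count m (ys ! j) = \<alpha> ! j" if "j < length ys" for j
      proof -
        have "count m (ys ! j) = (\<Sum>j'<length ys. if j' = j then \<alpha> ! j else 0)"
          unfolding cm by (rule sum.cong) (use that dys nth_eq_iff_index_eq in auto)
        then show ?thesis using that by simp
      qed
      have "set_mset m = set ys"
      proof
        show "set_mset m \<subseteq> set ys"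
        proof
          fix x assume "x \<in># m"
          then have "count m x \<noteq> 0" by simp
          show "x \<in> set ys"
          proof (rule ccontr)
            assume "x \<notin> set ys"
            then have "\<forall>j<length ys. ys ! j \<noteq> x" using nth_mem by blast
            then have "count m x = 0" unfolding cm by simp
            then show False using \<open>count m x \<noteq> 0\<close> by simp
          qed
        qed
        show "set ys \<subseteq> set_mset m"
        proof
          fix x assume "x \<in> set ys"
          then obtain j where j: "j < length ys" "ys ! j = x" by (meson in_set_conv_nth)
          then have "count m x = \<alpha> ! j" using cj by blast
          moreover have "\<alpha> ! j \<ge> 1" using pos j ys(1) nth_mem by metis
          ultimately show "x \<in># m" by (simp add: count_greater_zero_iff[symmetric])
        qed
      qed
      then have "ys = ix" using ixs strict_sorted_equal ys(2) by metis
      then have "\<alpha> = map (count m) ix" using cj ys(1) by (intro nth_equalityI) auto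
      moreover have "0 \<notin># m" using \<open>set_mset m = set ys\<close> ys(3) by auto
      ultimately show False using False by simp
    qed
    then show ?thesis using False unfolding M_coeff_def by simp
  qed
qed



lemma part2:
  fixes m :: "nat multiset" and V :: "'a set"
  assumes fin: "finite V"
  shows "F_graph V E m = (\<Sum>\<alpha>\<in>compositions (card V). zeta V E \<alpha> * M_coeff \<alpha> m)"
proof -
  define S where "S = set_mset m"
  define ix where "ix = sorted_list_of_set S"
  define k where "k = length ix"
  define \<alpha>0 where "\<alpha>0 = map (count m) ix"
  have ixs: "sorted_wrt (<) ix" "set ix = S" "distinct ix"
    unfolding ix_def S_def by (auto simp: strict_sorted_list_of_set)
  define C where "C = compositions (card V)"
  have rhs: "(\<Sum>\<alpha>\<in>C. zeta V E \<alpha> * M_coeff \<alpha> m) = (if \<alpha>0 \<in> C \<and> 0 \<notin># m then zeta V E \<alpha>0 else 0)"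
  proof -
    have "(\<Sum>\<alpha>\<in>C. zeta V E \<alpha> * M_coeff \<alpha> m) = (\<Sum>\<alpha>\<in>C. if \<alpha> = \<alpha>0 then (if 0 \<notin># m then zeta V E \<alpha>0 else 0) else 0)"
    proof (rule sum.cong)
      fix \<alpha> assume "\<alpha> \<in> C"
      then have "\<forall>a\<in>set \<alpha>. a \<ge> 1" unfolding C_def compositions_def by auto
      then show "zeta V E \<alpha> * M_coeff \<alpha> m = (if \<alpha> = \<alpha>0 then (if 0 \<notin># m then zeta V E \<alpha>0 else 0) else 0)"
        using M_char[of \<alpha> m] unfolding \<alpha>0_def ix_def S_def by auto
    qed simp
    also have "\<dots> = (if \<alpha>0 \<in> C \<and> 0 \<notin># m then zeta V E \<alpha>0 else 0)"
      using finite_compositions[of "card V"] unfolding C_def by (simp add: sum.delta')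
    finally show ?thesis .
  qed
  have a0C: "\<alpha>0 \<in> C \<longleftrightarrow> size m = card V"
  proof -
    have "\<forall>a\<in>set \<alpha>0. a \<ge> 1" unfolding \<alpha>0_def using ixs(2) S_def by auto
    moreover have "sum_list \<alpha>0 = size m"
      unfolding \<alpha>0_def using sum_list_distinct_conv_sum_set[OF ixs(3), of "count m"] ixs(2)
      by (simp add: S_def size_multiset_overloaded_eq)
    ultimately show ?thesis unfolding C_def compositions_def by auto
  qed
  define L where "L = {lam \<in> pos_maps V. ordered_coloring V E lam \<and> image_mset lam (mset_set V) = m}"
  have FL: "F_graph V E m = card L" unfolding F_graph_def L_def ..
  have Lprop: "size m = card V \<and> 0 \<notin># m \<and> lam ` V = S" if "lam \<in> L" for lam
  proof -
    have im: "image_mset lam (mset_set V) = m" and pm: "lam \<in> pos_maps V" using that unfolding L_def by auto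
    have "size m = card V" using im[symmetric] fin by simp
    moreover have "lam ` V = S" unfolding S_def using im[symmetric] fin by simp
    moreover have "0 \<notin># m" using pm \<open>lam ` V = S\<close> unfolding pos_maps_def S_def by force
    ultimately show ?thesis by blast
  qed
  show ?thesis
  proof (cases "size m = card V \<and> 0 \<notin># m")
    case False
    then have "L = {}" using Lprop by blast
    then show ?thesis using FL rhs a0C False unfolding C_def by simp
  next
    case True
    define Z where "Z = {lam \<in> pos_maps V. ordered_coloring V E lam
       \<and> lam ` V = {1..length \<alpha>0}
       \<and> (\<forall>j<length \<alpha>0. card {v\<in>V. lam v = j + 1} = \<alpha>0 ! j)}"
    have Zz: "zeta V E \<alpha>0 = card Z" unfolding zeta_def Z_def ..
    have lena: "length \<alpha>0 = k" unfolding \<alpha>0_def k_def by simp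
    have bij: "bij_betw ((!) ix) {..<k} S" unfolding k_def using bij_betw_nth[OF ixs(3) refl ixs(2)[symmetric]] .
    define r where "r = the_inv_into {..<k} ((!) ix)"
    have r1: "ix ! (r x) = x" if "x \<in> S" for x
      unfolding r_def using f_the_inv_into_f_bij_betw[OF bij] that by blast
    have r2: "r (ix ! j) = j" if "j < k" for j
      unfolding r_def using the_inv_into_f_f[OF bij_betw_imp_inj_on[OF bij]] that by simp
    have r3: "r x < k" if "x \<in> S" for x
      using bij_betw_the_inv_into[OF bij] that unfolding r_def bij_betw_def by auto
    have rS: "r ` S = {..<k}" using bij_betw_the_inv_into[OF bij] unfolding r_def bij_betw_def by auto
    have ixS: "ix ! j \<in> S" if "j < k" for j using ixs(2) that k_def nth_mem by blast
    have mono: "ix ! i < ix ! j \<longleftrightarrow> i < j" if "i < k" "j < k" for i j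
      using sorted_nth_less_iff[OF ixs(1)] that k_def by blast
    have S1: "x \<ge> 1" if "x \<in> S" for x using True that S_def by (metis less_one not_le)
    have cntm: "count m x = card {v\<in>V. lam v = x}" if "image_mset lam (mset_set V) = m" for lam x
      using count_image_mset_set[OF fin, of lam x] that by simp
    define Phi where "Phi lam = (\<lambda>v. if v \<in> V then Suc (r (lam v)) else 0)" for lam :: "'a \<Rightarrow> nat"
    define Psi where "Psi mu = (\<lambda>v. if v \<in> V then ix ! (mu v - 1) else 0)" for mu :: "'a \<Rightarrow> nat"
    have "bij_betw Phi L Z"
    proof (rule bij_betw_byWitness[where f'=Psi])
      show "\<forall>lam\<in>L. Psi (Phi lam) = lam"
      proof
        fix lam assume lL: "lam \<in> L"
        have "lam ` V = S" using Lprop[OF lL] by blast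
        moreover have "\<forall>v. v \<notin> V \<longrightarrow> lam v = 0" using lL unfolding L_def pos_maps_def by auto
        ultimately show "Psi (Phi lam) = lam" unfolding Psi_def Phi_def using r1 by fastforce
      qed
      show "\<forall>mu\<in>Z. Phi (Psi mu) = mu"
      proof
        fix mu assume mZ: "mu \<in> Z"
        have rng: "mu v \<in> {1..k}" if "v \<in> V" for v using mZ that lena unfolding Z_def by auto
        have out: "\<forall>v. v \<notin> V \<longrightarrow> mu v = 0" using mZ unfolding Z_def pos_maps_def by auto
        show "Phi (Psi mu) = mu"
        proof
          fix v show "Phi (Psi mu) v = mu v"
          proof (cases "v \<in> V")
            case True
            then have "mu v - 1 < k" "mu v \<ge> 1" using rng[OF True] by auto
            then show ?thesis unfolding Phi_def Psi_def using True r2 by simp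
          qed (use out in \<open>simp add: Phi_def\<close>)
        qed
      qed
      show "Phi ` L \<subseteq> Z"
      proof
        fix mu assume "mu \<in> Phi ` L"
        then obtain lam where lL: "lam \<in> L" and mu: "mu = Phi lam" by blast
        have lS: "lam ` V = S" using Lprop[OF lL] by blast
        have im: "image_mset lam (mset_set V) = m" and ol: "ordered_coloring V E lam" using lL unfolding L_def by auto
        have "mu \<in> pos_maps V" unfolding mu Phi_def pos_maps_def by auto
        moreover have "ordered_coloring V E mu"
        proof -
          have "ordered_coloring V E lam \<longleftrightarrow> ordered_coloring V E mu"
          proof (rule ordered_transfer[where h="\<lambda>x. Suc (r x)"])
            show "\<forall>v\<in>V. mu v = Suc (r (lam v))" unfolding mu Phi_def by simp
            show "\<forall>a\<in>lam ` V. \<forall>b\<in>lam ` V. (a < b) = (Suc (r a) < Suc (r b))"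
              unfolding lS using mono r1 r3 by (metis Suc_less_eq)
          qed
          then show ?thesis using ol by simp
        qed
        moreover have "mu ` V = {1..length \<alpha>0}"
        proof -
          have "mu ` V = Suc ` r ` lam ` V" unfolding mu Phi_def by (auto simp: image_iff)
          also have "\<dots> = {1..length \<alpha>0}" unfolding lS rS lena by (rule image_Suc_lessThan)
          finally show ?thesis .
        qed
        moreover have "\<forall>j<length \<alpha>0. card {v\<in>V. mu v = j + 1} = \<alpha>0 ! j"
        proof (intro allI impI)
          fix j assume j: "j < length \<alpha>0"
          have "{v\<in>V. mu v = j + 1} = {v\<in>V. lam v = ix ! j}"
          proof (rule Collect_cong)
            fix v
            show "(v \<in> V \<and> mu v = j + 1) = (v \<in> V \<and> lam v = ix ! j)"
            proof (cases "v \<in> V")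
              case True
              then have "lam v \<in> S" using lS by blast
              then show ?thesis unfolding mu Phi_def using True r1 r2 j lena by auto
            qed simp
          qed
          then show "card {v\<in>V. mu v = j + 1} = \<alpha>0 ! j"
            using cntm[OF im] j unfolding \<alpha>0_def by simp
        qed
        ultimately show "mu \<in> Z" unfolding Z_def by blast
      qed
      show "Psi ` Z \<subseteq> L"
      proof
        fix lam assume "lam \<in> Psi ` Z"
        then obtain mu where mZ: "mu \<in> Z" and lam: "lam = Psi mu" by blast
        have rng: "mu v \<in> {1..k}" if "v \<in> V" for v using mZ that lena unfolding Z_def by auto
        have om: "ordered_coloring V E mu" using mZ unfolding Z_def by auto
        have cards: "\<forall>j<k. card {v\<in>V. mu v = j + 1} = \<alpha>0 ! j" using mZ lena unfolding Z_def by auto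
        have "lam \<in> pos_maps V" unfolding pos_maps_def lam Psi_def
        proof (intro CollectI conjI allI impI ballI)
          fix v assume "v \<in> V"
          then have "mu v - 1 < k" using rng[OF \<open>v \<in> V\<close>] by auto
          then show "1 \<le> (if v \<in> V then ix ! (mu v - 1) else 0)" using \<open>v \<in> V\<close> ixS S1 by auto
        qed simp
        moreover have "ordered_coloring V E lam"
        proof -
          have "ordered_coloring V E mu \<longleftrightarrow> ordered_coloring V E lam"
          proof (rule ordered_transfer[where h="\<lambda>x. ix ! (x - 1)"])
            show "\<forall>v\<in>V. lam v = ix ! (mu v - 1)" unfolding lam Psi_def by simp
            show "\<forall>a\<in>mu ` V. \<forall>b\<in>mu ` V. (a < b) = (ix ! (a - 1) < ix ! (b - 1))"
            proof (intro ballI)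
              fix a b assume "a \<in> mu ` V" "b \<in> mu ` V"
              then have "a \<in> {1..k}" "b \<in> {1..k}" using rng by auto
              then have "a - 1 < k" "b - 1 < k" "a \<ge> 1" "b \<ge> 1" by auto
              then show "(a < b) = (ix ! (a - 1) < ix ! (b - 1))" using mono[of "a - 1" "b - 1"] by linarith
            qed
          qed
          then show ?thesis using om by simp
        qed
        moreover have "image_mset lam (mset_set V) = m"
        proof (rule multiset_eqI)
          fix x
          show "count (image_mset lam (mset_set V)) x = count m x"
          proof (cases "x \<in> S")
            case True
            then obtain j where j: "j < k" "ix ! j = x" using ixs(2) k_def by (metis in_set_conv_nth)
            have "{v\<in>V. lam v = x} = {v\<in>V. mu v = j + 1}"
            proof (rule Collect_cong)
              fix v
              show "(v \<in> V \<and> lam v = x) = (v \<in> V \<and> mu v = j + 1)"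
              proof (cases "v \<in> V")
                case True
                then have "mu v - 1 < k" "mu v \<ge> 1" using rng[OF True] by auto
                then have "ix ! (mu v - 1) = ix ! j \<longleftrightarrow> mu v - 1 = j"
                  using j(1) ixs(3) k_def nth_eq_iff_index_eq by blast
                then show ?thesis unfolding lam Psi_def using True j \<open>mu v \<ge> 1\<close> by auto
              qed simp
            qed
            then have "count (image_mset lam (mset_set V)) x = card {v\<in>V. mu v = j + 1}"
              using count_image_mset_set[OF fin, of lam x] by simp
            also have "\<dots> = \<alpha>0 ! j" using cards j by blast
            also have "\<dots> = count m x" using j unfolding \<alpha>0_def k_def by simp
            finally show ?thesis .
          next
            case False
            have "{v\<in>V. lam v = x} = {}"
            proof -
              have "lam v \<in> S" if "v \<in> V" for v
                using rng[OF that] ixS unfolding lam Psi_def using that by force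
              then show ?thesis using False by auto
            qed
            then have "count (image_mset lam (mset_set V)) x = 0"
              using count_image_mset_set[OF fin, of lam x] by (simp only: card.empty)
            then show ?thesis using False unfolding S_def
              by (simp add: not_in_iff)
          qed
        qed
        ultimately show "lam \<in> L" unfolding L_def by blast
      qed
    qed
    then have "card L = card Z" by (rule bij_betw_same_card)
    then show ?thesis using FL rhs a0C True Zz unfolding C_def by simp
  qed
qed


theorem mainTheorem9:
  fixes V :: "'a set" and E :: "'a \<Rightarrow> 'a \<Rightarrow> bool"
  assumes "simple_graph V E"
  shows "F_poly V (graph_associahedron V E) = F_graph V E
    \<and> (\<forall>m. F_graph V E m = (\<Sum>\<alpha>\<in>compositions (card V). zeta V E \<alpha> * M_coeff \<alpha> m))"
proof
  have fin: "finite V" using assms unfolding simple_graph_def by auto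
  show "F_poly V (graph_associahedron V E) = F_graph V E"
  proof
    fix m
    show "F_poly V (graph_associahedron V E) m = F_graph V E m"
      unfolding F_poly_def F_graph_def using part1[OF assms] by simp
  qed
  show "\<forall>m. F_graph V E m = (\<Sum>\<alpha>\<in>compositions (card V). zeta V E \<alpha> * M_coeff \<alpha> m)"
    using part2[OF fin] by blast
qed

end
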